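(* Let $\sigma>0$, $H\in(3/4,1)$, and let $(\Omega,\mathcal{F},P)$ carry a standard Brownian motion $B$ and an independent fractional Brownian motion $Z^H$ with Hurst parameter $H$ (so $Z^H_1,B_1$ are independent $N(0,1)$ under $P$). For $\alpha>0$ let $S^{H,\alpha}_0=1$ and $S^{H,\alpha}_1=\exp\big(\sigma(Z^H_1+\frac1\alpha B_1)-\frac{\sigma^2}{2\alpha^2}\big)$. Let $X=\exp(\sigma Z^H_1)$, $h(x)=\frac{1}{\sqrt{2\pi}\sigma x}\exp\big(-\frac12(\frac{\ln x}{\sigma})^2\big)$ for $x>0$ (the density of $X$ under $P$), $g(x)=e^{-x}/h(x)$, and define $\tilde P$ on $(\Omega,\mathcal{F})$ by $\frac{d\tilde P}{dP}=g(X)$. Then: (1) $\tilde P$ is a probability measure equivalent to $P$; (2) $E_{\tilde P}[S^{H,\alpha}_1]=1=S^{H,\alpha}_0$ for every $\alpha>0$; (3) letting $M^{H,\alpha}_1=\alpha Z^H_1+B_1$, $Q^{\alpha,1}$ the law of $M^{H,\alpha}_1$ under $P$ and $\tilde Q^{\alpha,1}$ its law under $\tilde P$ (both on $\mathbb{R}$), the families $(\tilde Q^{\alpha,1})_{\alpha>0}$ and $(Q^{\alpha,1})_{\alpha>0}$ are mutually contiguous as $\alpha\to\infty$: for any family of Borel sets $A^\alpha\subset\mathbb{R}$, $Q^{\alpha,1}(A^\alpha)\to0$ as $\alpha\to\infty$ if and only if $\tilde Q^{\alpha,1}(A^\alpha)\to0$ as $\alpha\to\infty$.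
   Context: A fractional Brownian motion with Hurst parameter $H$ is a continuous centred Gaussian process with covariance $\frac12(t^{2H}+s^{2H}-|t-s|^{2H})$. *)

theory Defs
  imports "HOL-Probability.Probability"
begin

definition fbm_cov :: "real \<Rightarrow> real \<Rightarrow> real \<Rightarrow> real" where
  "fbm_cov H t s = (1/2) * (t powr (2*H) + s powr (2*H) - \<bar>t - s\<bar> powr (2*H))"

text \<open>A continuous centred Gaussian process on [0,\<infinity>) with covariance K, on the probability
  space M. Gaussianity of all finite-dimensional distributions (with mean zero and covariance K)
  is expressed via their joint characteristic functions.\<close>
definition centred_gaussian_process ::
  "'a measure \<Rightarrow> (real \<Rightarrow> real \<Rightarrow> real) \<Rightarrow> (real \<Rightarrow> 'a \<Rightarrow> real) \<Rightarrow> bool" where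
  "centred_gaussian_process M K X \<longleftrightarrow>
     (\<forall>t\<ge>0. X t \<in> borel_measurable M) \<and>
     (\<forall>\<omega>\<in>space M. continuous_on {0..} (\<lambda>t. X t \<omega>)) \<and>
     (\<forall>T c. finite T \<longrightarrow> T \<subseteq> {0..} \<longrightarrow>
        (CLINT \<omega>|M. iexp (\<Sum>t\<in>T. c t * X t \<omega>)) =
          complex_of_real (exp (-(1/2) * (\<Sum>s\<in>T. \<Sum>t\<in>T. c s * c t * K s t))))"

definition fBm :: "'a measure \<Rightarrow> real \<Rightarrow> (real \<Rightarrow> 'a \<Rightarrow> real) \<Rightarrow> bool" where
  "fBm M H Z \<longleftrightarrow> centred_gaussian_process M (fbm_cov H) Z"

definition standard_BM :: "'a measure \<Rightarrow> (real \<Rightarrow> 'a \<Rightarrow> real) \<Rightarrow> bool" where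
  "standard_BM M B \<longleftrightarrow> centred_gaussian_process M (\<lambda>s t. min s t) B"

definition path :: "(real \<Rightarrow> 'a \<Rightarrow> real) \<Rightarrow> 'a \<Rightarrow> (real \<Rightarrow> real)" where
  "path X \<omega> = restrict (\<lambda>t. X t \<omega>) {0..}"

definition path_space :: "(real \<Rightarrow> real) measure" where
  "path_space = PiM {0..} (\<lambda>_. borel)"

definition hdens :: "real \<Rightarrow> real \<Rightarrow> real" where
  "hdens \<sigma> x = 1 / (sqrt (2*pi) * \<sigma> * x) * exp (-(1/2) * (ln x / \<sigma>)^2)"

definition gfun :: "real \<Rightarrow> real \<Rightarrow> real" where
  "gfun \<sigma> x = exp (-x) / hdens \<sigma> x"

end

theory Submission
  imports Defs "HOL-Real_Asymp.Real_Asymp"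
begin

lemma FTC_real_line:
  fixes f F :: "real \<Rightarrow> real"
  assumes F: "\<And>x. DERIV F x :> f x"
  assumes f: "\<And>x. isCont f x"
  assumes nn: "\<And>x. 0 \<le> f x"
  assumes A: "(F \<longlongrightarrow> a) at_bot"
  assumes B: "(F \<longlongrightarrow> b) at_top"
  shows "integrable lborel f" "integral\<^sup>L lborel f = b - a"
proof -
  have 1: "((F \<circ> real_of_ereal) \<longlongrightarrow> a) (at_right (-\<infinity>))"
    using A by (simp add: ereal_tendsto_simps1)
  have 2: "((F \<circ> real_of_ereal) \<longlongrightarrow> b) (at_left \<infinity>)"
    using B by (simp add: ereal_tendsto_simps1)
  note r = interval_integral_FTC_nonneg[of "-\<infinity>" \<infinity> F f, OF _ F f _ 1 2]
  have si: "set_integrable lborel UNIV f" using r(1) nn by simp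
  then show "integrable lborel f" by (simp add: set_integrable_def)
  have "(LBINT x=-\<infinity>..\<infinity>. f x) = b - a" using r(2) nn by simp
  then show "integral\<^sup>L lborel f = b - a"
    by (simp add: interval_lebesgue_integral_def set_lebesgue_integral_def)
qed


lemma gauss_std:
  assumes P: "prob_space M" and G: "centred_gaussian_process M K X" and K: "K 1 1 = 1"
  shows "distr M borel (X 1) = std_normal_distribution"
proof -
  interpret prob_space M by fact
  have meas: "X 1 \<in> borel_measurable M" using G unfolding centred_gaussian_process_def by auto
  have H: "\<And>T c. finite T \<Longrightarrow> T \<subseteq> {0..} \<Longrightarrow> (CLINT \<omega>|M. iexp (\<Sum>t\<in>T. c t * X t \<omega>)) =
          complex_of_real (exp (-(1/2) * (\<Sum>s\<in>T. \<Sum>t\<in>T. c s * c t * K s t)))"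
    using G unfolding centred_gaussian_process_def by blast
  have rd: "real_distribution (distr M borel (X 1))"
    using meas by (simp add: real_distribution_distr)
  have "char (distr M borel (X 1)) = char std_normal_distribution"
  proof
    fix u :: real
    have "char (distr M borel (X 1)) u = (CLINT \<omega>|M. iexp (u * X 1 \<omega>))"
      unfolding char_def using meas by (subst integral_distr) auto
    also have "\<dots> = complex_of_real (exp (- (u^2) / 2))"
      using H[of "{1}" "\<lambda>_. u"] K by (simp add: power2_eq_square)
    finally show "char (distr M borel (X 1)) u = char std_normal_distribution u"
      by (simp add: char_std_normal_distribution)
  qed
  then show ?thesis using Levy_uniqueness[OF rd real_dist_normal_dist] by simp
qed


lemma integrable_ind_mult:
  fixes f :: "'a \<Rightarrow> real"
  shows "A \<in> sets M \<Longrightarrow> integrable M f \<Longrightarrow> integrable M (\<lambda>x. indicator A x * f x)"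
  using integrable_real_mult_indicator[of A M f] by (simp add: mult_ac)

lemma measure_density_int:
  fixes w :: "'a \<Rightarrow> real"
  assumes "integrable N w" "\<And>x. x \<in> space N \<Longrightarrow> 0 \<le> w x" "E \<in> sets N"
  shows "measure (density N w) E = (\<integral>x. indicator E x * w x \<partial>N)"
proof -
  have wm: "w \<in> borel_measurable N" using assms(1) by auto
  have i: "integrable N (\<lambda>x. indicator E x * w x)"
    using assms by (intro integrable_ind_mult) auto
  have "emeasure (density N w) E = (\<integral>\<^sup>+x. ennreal (w x) * indicator E x \<partial>N)"
    using assms wm by (simp add: emeasure_density)
  also have "\<dots> = (\<integral>\<^sup>+x. ennreal (indicator E x * w x) \<partial>N)"
    by (intro nn_integral_cong) (auto simp: indicator_def)
  also have "\<dots> = ennreal (\<integral>x. indicator E x * w x \<partial>N)"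
    using assms i by (intro nn_integral_eq_integral) auto
  finally show ?thesis unfolding measure_def
    using assms i by (simp add: integral_nonneg_AE)
qed

lemma contig_gen:
  fixes N :: "'a measure" and w :: "'a \<Rightarrow> real" and E :: "'b \<Rightarrow> 'a set"
  assumes fin: "finite_measure N" and int: "integrable N w" and nn: "\<And>x. x \<in> space N \<Longrightarrow> 0 \<le> w x"
    and ev: "\<forall>\<^sub>F a in F. E a \<in> sets N"
    and lim: "((\<lambda>a. measure N (E a)) \<longlongrightarrow> 0) F"
  shows "((\<lambda>a. measure (density N w) (E a)) \<longlongrightarrow> 0) F"
proof -
  interpret finite_measure N by fact
  have wm: "w \<in> borel_measurable N" using int by auto
  define T where "T = (\<lambda>n::nat. \<integral>x. max (w x - real n) 0 \<partial>N)"
  have intT: "integrable N (\<lambda>x. max (w x - real n) 0)" for n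
    by (rule Bochner_Integration.integrable_bound[OF int]) (use wm nn in auto)
  have T0: "T \<longlonglongrightarrow> 0"
  proof -
    have "(\<lambda>n. \<integral>x. max (w x - real n) 0 \<partial>N) \<longlonglongrightarrow> (\<integral>x. 0 \<partial>N)"
    proof (rule integral_dominated_convergence[where w=w])
      show "AE x in N. (\<lambda>n. max (w x - real n) 0) \<longlonglongrightarrow> 0"
      proof (rule AE_I2)
        fix x assume "x \<in> space N"
        show "(\<lambda>n. max (w x - real n) 0) \<longlonglongrightarrow> 0"
        proof (rule tendsto_eventually)
          obtain n :: nat where "w x \<le> real n" using real_arch_simple by blast
          then show "\<forall>\<^sub>F n in sequentially. max (w x - real n) 0 = 0"
            unfolding eventually_sequentially
            by (intro exI[of _ n]) (auto simp: max_def)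
        qed
      qed
      show "AE x in N. norm (max (w x - real n) 0) \<le> w x" for n
        using nn by (auto simp: max_def)
    qed (use wm int in auto)
    then show ?thesis by (simp add: T_def)
  qed
  have bound: "measure (density N w) E \<le> real n * measure N E + T n" if E: "E \<in> sets N" for E n
  proof -
    have iE: "integrable N (indicator E :: 'a \<Rightarrow> real)"
      using E by (simp add: integrable_indicator_iff Int_absorb1 sets.sets_into_space less_top[symmetric])
    have "measure (density N w) E = (\<integral>x. indicator E x * w x \<partial>N)"
      by (rule measure_density_int[OF int nn E])
    also have "\<dots> \<le> (\<integral>x. real n * indicator E x + max (w x - real n) 0 \<partial>N)"
      by (intro integral_mono integrable_ind_mult int E Bochner_Integration.integrable_add
            integrable_mult_right iE intT)
         (auto simp: indicator_def E)
    also have "\<dots> = real n * measure N E + T n"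
      using E intT iE by (simp add: T_def)
    finally show ?thesis .
  qed
  show ?thesis
  proof (rule tendstoI)
    fix e :: real assume e: "0 < e"
    obtain n where n: "T n < e/2"
      using T0 e unfolding LIMSEQ_def by (metis dist_real_def diff_zero half_gt_zero abs_less_iff order.refl)
    have "\<forall>\<^sub>F a in F. dist (measure N (E a)) 0 < e / (2 * (real n + 1))"
      using lim e by (intro tendstoD) (auto simp: add_pos_nonneg)
    then show "\<forall>\<^sub>F a in F. dist (measure (density N w) (E a)) 0 < e"
      using ev
    proof eventually_elim
      case (elim a)
      have m0: "0 \<le> measure N (E a)" by simp
      have "measure N (E a) < e / (2 * (real n + 1))" using elim by simp
      then have "(real n + 1) * measure N (E a) < e/2"
        by (simp add: field_simps)
      then have "real n * measure N (E a) < e/2" using m0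
        by (smt (verit) mult_right_mono)
      moreover have "0 \<le> measure (density N w) (E a)" by simp
      ultimately show ?case using bound[OF elim(2), of n] n by simp
    qed
  qed
qed


lemma int1:
  fixes s :: real assumes s: "s > 0"
  shows "integrable lborel (\<lambda>z. s * exp (s*z) * exp (- exp (s*z)))"
    "(\<integral>z. s * exp (s*z) * exp (- exp (s*z)) \<partial>lborel) = 1"
proof -
  have d: "DERIV (\<lambda>z. - exp (- exp (s*z))) x :> s * exp (s*x) * exp (- exp (s*x))" for x
    by (auto intro!: derivative_eq_intros)
  have a: "((\<lambda>z. - exp (- exp (s*z))) \<longlongrightarrow> -1) at_bot" using s by real_asymp
  have b: "((\<lambda>z. - exp (- exp (s*z))) \<longlongrightarrow> 0) at_top" using s by real_asymp
  note r = FTC_real_line[OF d _ _ a b]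
  show "integrable lborel (\<lambda>z. s * exp (s*z) * exp (- exp (s*z)))"
    using s by (intro r) (auto intro!: continuous_intros)
  show "(\<integral>z. s * exp (s*z) * exp (- exp (s*z)) \<partial>lborel) = 1"
    using s r(2) by (auto intro!: continuous_intros)
qed

lemma int2:
  fixes s :: real assumes s: "s > 0"
  shows "integrable lborel (\<lambda>z. s * exp (s*z) * exp (- exp (s*z)) * exp (s*z))"
    "(\<integral>z. s * exp (s*z) * exp (- exp (s*z)) * exp (s*z) \<partial>lborel) = 1"
proof -
  have d: "DERIV (\<lambda>z. - (1 + exp (s*z)) * exp (- exp (s*z))) x :> s * exp (s*x) * exp (- exp (s*x)) * exp (s*x)" for x
    by (auto intro!: derivative_eq_intros simp: algebra_simps)
  have a: "((\<lambda>z. - (1 + exp (s*z)) * exp (- exp (s*z))) \<longlongrightarrow> -1) at_bot" using s by real_asymp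
  have b: "((\<lambda>z. - (1 + exp (s*z)) * exp (- exp (s*z))) \<longlongrightarrow> 0) at_top" using s by real_asymp
  note r = FTC_real_line[OF d _ _ a b]
  show "integrable lborel (\<lambda>z. s * exp (s*z) * exp (- exp (s*z)) * exp (s*z))"
    using s by (intro r) (auto intro!: continuous_intros)
  show "(\<integral>z. s * exp (s*z) * exp (- exp (s*z)) * exp (s*z) \<partial>lborel) = 1"
    using s r(2) by (auto intro!: continuous_intros)
qed


lemma std_int:
  fixes u :: "real \<Rightarrow> real"
  assumes d: "distr M borel X = std_normal_distribution" and X: "X \<in> borel_measurable M"
    and u: "u \<in> borel_measurable borel" and i: "integrable lborel (\<lambda>z. std_normal_density z * u z)"
  shows "integrable M (\<lambda>\<omega>. u (X \<omega>))" "(\<integral>\<omega>. u (X \<omega>) \<partial>M) = (\<integral>z. std_normal_density z * u z \<partial>lborel)"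
proof -
  have "integrable (distr M borel X) u \<longleftrightarrow> integrable M (\<lambda>\<omega>. u (X \<omega>))"
    using X u by (rule integrable_distr_eq)
  moreover have "integrable (distr M borel X) u"
    unfolding d using i u by (subst integrable_density) (auto simp: normal_density_nonneg)
  ultimately show "integrable M (\<lambda>\<omega>. u (X \<omega>))" by simp
  have "(\<integral>\<omega>. u (X \<omega>) \<partial>M) = integral\<^sup>L (distr M borel X) u"
    using X u by (simp add: integral_distr)
  also have "\<dots> = (\<integral>z. std_normal_density z * u z \<partial>lborel)"
    unfolding d using u by (subst integral_density) (auto simp: normal_density_nonneg)
  finally show "(\<integral>\<omega>. u (X \<omega>) \<partial>M) = (\<integral>z. std_normal_density z * u z \<partial>lborel)" .
qed


lemma rho_key:
  assumes s: "(s::real) > 0"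
  shows "gfun s (exp (s*z)) * std_normal_density z = s * exp (s*z) * exp (- exp (s*z))"
    "gfun s (exp (s*z)) > 0"
proof -
  define x where "x = exp (s*z)"
  define q where "q = exp (-(1/2) * z^2)"
  have x: "x > 0" "q > 0" by (auto simp: x_def q_def)
  have l: "ln x / s = z" using s by (simp add: x_def)
  have h: "hdens s x = q / (sqrt (2*pi) * s * x)"
    unfolding hdens_def l q_def by simp
  have n: "std_normal_density z = q / sqrt (2*pi)"
  proof -
    have a: "-(z-0)\<^sup>2/(2*1\<^sup>2) = -(1/2)*z^2" by simp
    have b: "sqrt (2*pi*1\<^sup>2) = sqrt (2*pi)" by simp
    show ?thesis unfolding normal_density_def q_def a b by simp
  qed
  have pp: "sqrt (2*pi) > 0" by simp
  show "gfun s (exp (s*z)) * std_normal_density z = s * exp (s*z) * exp (- exp (s*z))"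
  proof -
    have "gfun s x * std_normal_density z = exp (-x) / (q / (sqrt (2*pi) * s * x)) * (q / sqrt (2*pi))"
      unfolding gfun_def h n by simp
    also have "\<dots> = s * x * exp (-x)" using x pp s by (simp add: field_simps)
    finally show ?thesis by (simp add: x_def)
  qed
  show "gfun s (exp (s*z)) > 0"
    unfolding x_def[symmetric] gfun_def h using x pp s by (simp add: field_simps)
qed


lemma mgf_normal:
  fixes t :: real
  shows "std_normal_density b * exp (t * b - t^2/2) = normal_density t 1 b"
proof -
  have a: "- ((b - 0)\<^sup>2 / (2 * 1\<^sup>2)) + (t * b - t^2/2) = - ((b - t)\<^sup>2 / (2 * 1\<^sup>2))"
    by (simp add: power2_eq_square field_simps)
  have "exp (- ((b - 0)\<^sup>2 / (2 * 1\<^sup>2))) * exp (t * b - t^2/2) = exp (- ((b - t)\<^sup>2 / (2 * 1\<^sup>2)))"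
    unfolding exp_add[symmetric] a ..
  then show ?thesis unfolding normal_density_def mult.assoc by simp
qed


theorem lemma4p1:
  fixes M :: "'a measure" and \<sigma> H :: real and Z B :: "real \<Rightarrow> 'a \<Rightarrow> real"
  assumes "prob_space M"
    and "\<sigma> > 0" and "3/4 < H" and "H < 1"
    and "standard_BM M B" and "fBm M H Z"
    and "prob_space.indep_var M path_space (path Z) path_space (path B)"
  defines "S \<equiv> (\<lambda>\<alpha> \<omega>. exp (\<sigma> * (Z 1 \<omega> + (1/\<alpha>) * B 1 \<omega>) - \<sigma>^2 / (2 * \<alpha>^2)))"
    and "Pt \<equiv> density M (\<lambda>\<omega>. ennreal (gfun \<sigma> (exp (\<sigma> * Z 1 \<omega>))))"
    and "Q \<equiv> (\<lambda>\<alpha>. distr M borel (\<lambda>\<omega>. \<alpha> * Z 1 \<omega> + B 1 \<omega>))"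
    and "Qt \<equiv> (\<lambda>\<alpha>. distr (density M (\<lambda>\<omega>. ennreal (gfun \<sigma> (exp (\<sigma> * Z 1 \<omega>))))) borel (\<lambda>\<omega>. \<alpha> * Z 1 \<omega> + B 1 \<omega>))"
  shows "(prob_space Pt \<and> absolutely_continuous M Pt \<and> absolutely_continuous Pt M) \<and>
         (\<forall>\<alpha>>0. integrable Pt (S \<alpha>) \<and> (\<integral>\<omega>. S \<alpha> \<omega> \<partial>Pt) = 1) \<and>
         (\<forall>A :: real \<Rightarrow> real set. (\<forall>\<alpha>>0. A \<alpha> \<in> sets borel) \<longrightarrow>
           (((\<lambda>\<alpha>. measure (Q \<alpha>) (A \<alpha>)) \<longlongrightarrow> 0) at_top \<longleftrightarrow>
            ((\<lambda>\<alpha>. measure (Qt \<alpha>) (A \<alpha>)) \<longlongrightarrow> 0) at_top))"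
proof -
  interpret P: prob_space M by fact
  note s = \<open>\<sigma> > 0\<close>
  have GZ: "centred_gaussian_process M (fbm_cov H) Z" using assms(6) by (simp add: fBm_def)
  have GB: "centred_gaussian_process M (\<lambda>s t. min s t) B" using assms(5) by (simp add: standard_BM_def)
  have K1: "fbm_cov H 1 1 = 1" by (simp add: fbm_cov_def)
  have dZ: "distr M borel (Z 1) = std_normal_distribution" by (rule gauss_std[OF assms(1) GZ K1])
  have dB: "distr M borel (B 1) = std_normal_distribution" by (rule gauss_std[OF assms(1) GB]) simp
  have mZ[measurable]: "Z 1 \<in> borel_measurable M" using GZ unfolding centred_gaussian_process_def by auto
  have mB[measurable]: "B 1 \<in> borel_measurable M" using GB unfolding centred_gaussian_process_def by auto
  have ev1: "(\<lambda>p. p 1) \<in> measurable path_space borel"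
    unfolding path_space_def by (rule measurable_component_singleton) simp
  have ind: "P.indep_var borel (Z 1) borel (B 1)"
  proof -
    have "P.indep_var borel ((\<lambda>p. p 1) \<circ> path Z) borel ((\<lambda>p. p 1) \<circ> path B)"
      by (rule P.indep_var_compose[OF assms(7) ev1 ev1])
    moreover have "(\<lambda>p. p 1) \<circ> path Z = Z 1" "(\<lambda>p. p 1) \<circ> path B = B 1"
      by (auto simp: path_def)
    ultimately show ?thesis by simp
  qed
  define \<rho> where "\<rho> = (\<lambda>z. gfun \<sigma> (exp (\<sigma> * z)))"
  have \<rho>pos: "\<rho> z > 0" for z unfolding \<rho>_def using rho_key(2)[OF s] by simp
  have \<rho>key: "std_normal_density z * \<rho> z = \<sigma> * exp (\<sigma>*z) * exp (- exp (\<sigma>*z))" for z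
    unfolding \<rho>_def using rho_key(1)[OF s, of z] by (simp only: mult.commute)
  have m\<rho>[measurable]: "\<rho> \<in> borel_measurable borel"
    unfolding \<rho>_def gfun_def hdens_def by measurable
  have Pt: "Pt = density M (\<lambda>\<omega>. ennreal (\<rho> (Z 1 \<omega>)))" unfolding Pt_def \<rho>_def ..
  have i\<rho>: "integrable M (\<lambda>\<omega>. \<rho> (Z 1 \<omega>))" and I\<rho>: "(\<integral>\<omega>. \<rho> (Z 1 \<omega>) \<partial>M) = 1"
    using std_int[OF dZ mZ m\<rho>] int1[OF s] by (simp_all add: \<rho>key)
  have part1: "prob_space Pt \<and> absolutely_continuous M Pt \<and> absolutely_continuous Pt M"
  proof (intro conjI)
    have "emeasure Pt (space Pt) = (\<integral>\<^sup>+\<omega>. ennreal (\<rho> (Z 1 \<omega>)) \<partial>M)"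
      unfolding Pt by (subst emeasure_density) (auto intro!: nn_integral_cong)
    also have "\<dots> = 1" using i\<rho> I\<rho> \<rho>pos
      by (subst nn_integral_eq_integral) (auto intro: less_imp_le)
    finally show "prob_space Pt" by (rule prob_spaceI)
    show "absolutely_continuous M Pt" unfolding Pt by (rule absolutely_continuousI_density) measurable
    show "absolutely_continuous Pt M" unfolding absolutely_continuous_def
    proof
      fix A assume "A \<in> null_sets Pt"
      then have A: "A \<in> sets M" "AE x in M. x \<in> A \<longrightarrow> ennreal (\<rho> (Z 1 x)) = 0"
      proof -
        have "(\<lambda>\<omega>. ennreal (\<rho> (Z 1 \<omega>))) \<in> borel_measurable M" by measurable
        from null_sets_density_iff[OF this, of A] \<open>A \<in> null_sets Pt\<close>
        show "A \<in> sets M" "AE x in M. x \<in> A \<longrightarrow> ennreal (\<rho> (Z 1 x)) = 0"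
          unfolding Pt by simp_all
      qed
      have "AE x in M. x \<notin> A"
      proof (rule AE_mp[OF A(2)], rule AE_I2, intro impI)
        fix x assume "x \<in> A \<longrightarrow> ennreal (\<rho> (Z 1 x)) = 0"
        moreover have "ennreal (\<rho> (Z 1 x)) \<noteq> 0" using \<rho>pos[of "Z 1 x"] by simp
        ultimately show "x \<notin> A" by blast
      qed
      then show "A \<in> null_sets M" using A(1) by (simp add: AE_iff_null_sets)
    qed
  qed
  have part2: "\<forall>\<alpha>>0. integrable Pt (S \<alpha>) \<and> (\<integral>\<omega>. S \<alpha> \<omega> \<partial>Pt) = 1"
  proof (intro allI impI)
    fix \<alpha> :: real assume \<alpha>: "\<alpha> > 0"
    define u where "u = (\<lambda>z. \<rho> z * exp (\<sigma> * z))"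
    define t where "t = \<sigma> / \<alpha>"
    define v where "v = (\<lambda>b. exp (t * b - t^2/2))"
    have mu[measurable]: "u \<in> borel_measurable borel" unfolding u_def by measurable
    have mv[measurable]: "v \<in> borel_measurable borel" unfolding v_def by measurable
    have Seq: "\<rho> (Z 1 \<omega>) * S \<alpha> \<omega> = u (Z 1 \<omega>) * v (B 1 \<omega>)" for \<omega>
    proof -
      have "\<sigma> * (Z 1 \<omega> + (1/\<alpha>) * B 1 \<omega>) - \<sigma>^2 / (2 * \<alpha>^2) = \<sigma> * Z 1 \<omega> + (t * B 1 \<omega> - t^2/2)"
        unfolding t_def using \<alpha> by (simp add: power_divide field_simps)
      then show ?thesis unfolding S_def u_def v_def by (simp add: exp_add)
    qed
    have uu: "std_normal_density z * u z = \<sigma> * exp (\<sigma>*z) * exp (- exp (\<sigma>*z)) * exp (\<sigma>*z)" for z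
      unfolding u_def using \<rho>key[of z] by (simp only: mult.assoc[symmetric])
    have iu: "integrable M (\<lambda>\<omega>. u (Z 1 \<omega>))" and Iu: "(\<integral>\<omega>. u (Z 1 \<omega>) \<partial>M) = 1"
      using std_int[OF dZ mZ mu] int2[OF s] by (simp_all add: uu)
    have vv: "std_normal_density z * v z = normal_density t 1 z" for z
      unfolding v_def by (rule mgf_normal)
    have iv: "integrable M (\<lambda>\<omega>. v (B 1 \<omega>))" and Iv: "(\<integral>\<omega>. v (B 1 \<omega>) \<partial>M) = 1"
      using std_int[OF dB mB mv] by (simp_all add: vv)
    have indUV: "P.indep_var borel (u \<circ> Z 1) borel (v \<circ> B 1)"
      by (rule P.indep_var_compose[OF ind mu mv])
    have iUV: "integrable M (\<lambda>\<omega>. u (Z 1 \<omega>) * v (B 1 \<omega>))"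
      using P.indep_var_integrable[OF indUV] iu iv by (simp add: comp_def)
    have IUV: "(\<integral>\<omega>. u (Z 1 \<omega>) * v (B 1 \<omega>) \<partial>M) = 1"
      using P.indep_var_lebesgue_integral[OF indUV] iu iv Iu Iv by (simp add: comp_def)
    have mS[measurable]: "S \<alpha> \<in> borel_measurable M" unfolding S_def by measurable
    have g: "(\<lambda>\<omega>. \<rho> (Z 1 \<omega>)) \<in> borel_measurable M" "AE \<omega> in M. 0 \<le> \<rho> (Z 1 \<omega>)"
      using \<rho>pos by (auto intro: less_imp_le)
    show "integrable Pt (S \<alpha>) \<and> (\<integral>\<omega>. S \<alpha> \<omega> \<partial>Pt) = 1"
    proof
      show "integrable Pt (S \<alpha>)" unfolding Pt
        using integrable_density[OF mS g] iUV by (simp add: Seq)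
      show "(\<integral>\<omega>. S \<alpha> \<omega> \<partial>Pt) = 1" unfolding Pt
        using integral_density[OF mS g] IUV by (simp add: Seq)
    qed
  qed
  have part3: "\<forall>A :: real \<Rightarrow> real set. (\<forall>\<alpha>>0. A \<alpha> \<in> sets borel) \<longrightarrow>
           (((\<lambda>\<alpha>. measure (Q \<alpha>) (A \<alpha>)) \<longlongrightarrow> 0) at_top \<longleftrightarrow>
            ((\<lambda>\<alpha>. measure (Qt \<alpha>) (A \<alpha>)) \<longlongrightarrow> 0) at_top)"
  proof (intro allI impI)
    fix A :: "real \<Rightarrow> real set" assume A: "\<forall>\<alpha>>0. A \<alpha> \<in> sets borel"
    define E where "E = (\<lambda>\<alpha>. {\<omega> \<in> space M. \<alpha> * Z 1 \<omega> + B 1 \<omega> \<in> A \<alpha>})"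
    have mf: "(\<lambda>\<omega>. \<alpha> * Z 1 \<omega> + B 1 \<omega>) \<in> borel_measurable M" for \<alpha> by measurable
    have Eeq: "E \<alpha> = (\<lambda>\<omega>. \<alpha> * Z 1 \<omega> + B 1 \<omega>) -` A \<alpha> \<inter> space M" for \<alpha>
      unfolding E_def by auto
    have evE: "\<forall>\<^sub>F \<alpha> in at_top. E \<alpha> \<in> sets M"
      using eventually_gt_at_top[of "0::real"]
    proof eventually_elim
      case (elim \<alpha>) then show ?case unfolding Eeq using A by (intro measurable_sets[OF mf]) auto
    qed
    have EQ: "\<forall>\<^sub>F \<alpha> in at_top. measure (Q \<alpha>) (A \<alpha>) = measure M (E \<alpha>)"
      using eventually_gt_at_top[of "0::real"]
    proof eventually_elim
      case (elim \<alpha>) then show ?case unfolding Q_def Eeq using A mf by (subst measure_distr) auto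
    qed
    have EQt: "\<forall>\<^sub>F \<alpha> in at_top. measure (Qt \<alpha>) (A \<alpha>) = measure Pt (E \<alpha>)"
      using eventually_gt_at_top[of "0::real"]
    proof eventually_elim
      case (elim \<alpha>) then show ?case unfolding Qt_def Pt_def[symmetric] Eeq using A mf
        by (subst measure_distr) (auto simp: Pt)
    qed
    have psPt: "prob_space Pt" using part1 by blast
    then interpret Pt: prob_space Pt .
    have nn: "\<And>x. x \<in> space M \<Longrightarrow> 0 \<le> \<rho> (Z 1 x)" using \<rho>pos by (auto intro: less_imp_le)
    have dd: "density Pt (\<lambda>\<omega>. ennreal (1 / \<rho> (Z 1 \<omega>))) = M"
    proof -
      have "density Pt (\<lambda>\<omega>. ennreal (1 / \<rho> (Z 1 \<omega>)))
           = density M (\<lambda>\<omega>. ennreal (\<rho> (Z 1 \<omega>)) * ennreal (1 / \<rho> (Z 1 \<omega>)))"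
        unfolding Pt by (rule density_density_eq) measurable
      also have "\<dots> = density M (\<lambda>_. 1)"
      proof (rule density_cong)
        show "(\<lambda>\<omega>. ennreal (\<rho> (Z 1 \<omega>)) * ennreal (1 / \<rho> (Z 1 \<omega>))) \<in> borel_measurable M"
          by measurable
        show "AE x in M. ennreal (\<rho> (Z 1 x)) * ennreal (1 / \<rho> (Z 1 x)) = 1"
        proof (rule AE_I2)
          fix x
          have p: "\<rho> (Z 1 x) > 0" by (rule \<rho>pos)
          then have "ennreal (\<rho> (Z 1 x)) * ennreal (1 / \<rho> (Z 1 x)) = ennreal (\<rho> (Z 1 x) * (1 / \<rho> (Z 1 x)))"
            by (subst ennreal_mult) auto
          also have "\<dots> = 1" using p by simp
          finally show "ennreal (\<rho> (Z 1 x)) * ennreal (1 / \<rho> (Z 1 x)) = 1" .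
        qed
      qed simp
      also have "\<dots> = M" by (rule density_1)
      finally show ?thesis .
    qed
    have "((\<lambda>\<alpha>. measure M (E \<alpha>)) \<longlongrightarrow> 0) at_top \<longleftrightarrow> ((\<lambda>\<alpha>. measure Pt (E \<alpha>)) \<longlongrightarrow> 0) at_top"
    proof
      assume l: "((\<lambda>\<alpha>. measure M (E \<alpha>)) \<longlongrightarrow> 0) at_top"
      have "((\<lambda>\<alpha>. measure (density M (\<lambda>\<omega>. ennreal (\<rho> (Z 1 \<omega>)))) (E \<alpha>)) \<longlongrightarrow> 0) at_top"
        by (rule contig_gen[OF P.finite_measure_axioms i\<rho> nn evE l])
      then show "((\<lambda>\<alpha>. measure Pt (E \<alpha>)) \<longlongrightarrow> 0) at_top" unfolding Pt .
    next
      assume l: "((\<lambda>\<alpha>. measure Pt (E \<alpha>)) \<longlongrightarrow> 0) at_top"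
      have mw: "(\<lambda>\<omega>. 1 / \<rho> (Z 1 \<omega>)) \<in> borel_measurable Pt" unfolding Pt by measurable
      have gP: "(\<lambda>\<omega>. \<rho> (Z 1 \<omega>)) \<in> borel_measurable M" "AE \<omega> in M. 0 \<le> \<rho> (Z 1 \<omega>)"
        using nn by auto
      have iw: "integrable Pt (\<lambda>\<omega>. 1 / \<rho> (Z 1 \<omega>))"
      proof -
        have "integrable M (\<lambda>\<omega>. \<rho> (Z 1 \<omega>) *\<^sub>R (1 / \<rho> (Z 1 \<omega>)))"
          using \<rho>pos by (simp add: less_imp_neq[symmetric])
        then show ?thesis unfolding Pt
          using integrable_density[OF _ gP, of "\<lambda>\<omega>. 1 / \<rho> (Z 1 \<omega>)"] by simp
      qed
      have nnw: "\<And>x. x \<in> space Pt \<Longrightarrow> 0 \<le> 1 / \<rho> (Z 1 x)" using \<rho>pos by (auto intro: less_imp_le)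
      have evE': "\<forall>\<^sub>F \<alpha> in at_top. E \<alpha> \<in> sets Pt" using evE unfolding Pt by simp
      have "((\<lambda>\<alpha>. measure (density Pt (\<lambda>\<omega>. ennreal (1 / \<rho> (Z 1 \<omega>)))) (E \<alpha>)) \<longlongrightarrow> 0) at_top"
        by (rule contig_gen[OF Pt.finite_measure_axioms iw nnw evE' l])
      then show "((\<lambda>\<alpha>. measure M (E \<alpha>)) \<longlongrightarrow> 0) at_top" unfolding dd .
    qed
    then show "((\<lambda>\<alpha>. measure (Q \<alpha>) (A \<alpha>)) \<longlongrightarrow> 0) at_top \<longleftrightarrow>
            ((\<lambda>\<alpha>. measure (Qt \<alpha>) (A \<alpha>)) \<longlongrightarrow> 0) at_top"
      using tendsto_cong[OF EQ] tendsto_cong[OF EQt] by simp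
  qed
  show ?thesis using part1 part2 part3 by blast
qed

end
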